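(* Let $\delta=\inf(\sigma(-\Delta)\setminus\{0\})\ge0$. (i) If $\delta>0$, then for every $\varepsilon>0$ one has the continuous embedding $H^{2\varepsilon}(M)\subset H^{\log}(M)$. (ii) If $\delta=0$ and, for every $k=1,2,\dots$, the interval $I_k=\big(\tfrac1{k+1},\tfrac1k\big]$ satisfies $I_k\cap\sigma(-\Delta)\neq\emptyset$, then for every $\varepsilon>0$ there exists $f\in H^{2\varepsilon}(M)$ with $f\notin H^{\log}(M)$.
   Context: Standing setting: $-\Delta$ is a self-adjoint operator on $L^2(M,\mu)$ with spectrum $\sigma(-\Delta)\subset[0,\infty)$ and projection-valued spectral measure $E$; $E_{f,g}(B)=\langle E(B)f,g\rangle$. For $\tau\ge0$, $H^{\tau}(M)=\{f\in L^2(M,\mu):\int_{[0,\infty)}\lambda^{\tau}\,dE_{f,f}(\lambda)<\infty\}$ with norm $\|f\|^2_{H^\tau}=\int(1+\lambda)^{\tau}dE_{f,f}$ (so $H^{2s}(M)$ is the domain of $(-\Delta)^s=\int\lambda^s dE$). $H^{\log}(M)=\{f\in L^2(M,\mu):\int_{(0,\infty)}(\log\lambda)^2\,dE_{f,f}(\lambda)<\infty\}$ with norm $\|f\|_{\log}^2=\|f\|_{L^2}^2+\int_{(0,\infty)}(\log\lambda)^2dE_{f,f}$. *)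

theory Defs
  imports "HOL-Analysis.Analysis"
begin

definition pvm :: "(real set \<Rightarrow> 'h::{real_inner,complete_space} \<Rightarrow> 'h) \<Rightarrow> bool" where
  "pvm E \<longleftrightarrow>
     (\<forall>B\<in>sets borel. bounded_linear (E B)
        \<and> (\<forall>x. E B (E B x) = E B x)
        \<and> (\<forall>x y. inner (E B x) y = inner x (E B y)))
   \<and> E {} = (\<lambda>x. 0)
   \<and> E UNIV = id
   \<and> (\<forall>A\<in>sets borel. \<forall>B\<in>sets borel. \<forall>x. E (A \<inter> B) x = E A (E B x))
   \<and> (\<forall>A x. range A \<subseteq> sets borel \<longrightarrow> disjoint_family A \<longrightarrow>
        (\<lambda>n. E (A n) x) sums E (\<Union>n. A n) x)"

text \<open>Spectrum of the operator \<open>\<integral>\<lambda> dE\<close>: the support of its spectral measure.\<close>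
definition pvm_spectrum :: "(real set \<Rightarrow> 'h::real_inner \<Rightarrow> 'h) \<Rightarrow> real set" where
  "pvm_spectrum E = {l. \<forall>e>0. E {l - e<..<l + e} \<noteq> (\<lambda>x. 0)}"

text \<open>delta = inf (sigma \ {0}), taken in the extended reals (inf of the empty set is +infinity).\<close>
definition spec_delta :: "(real set \<Rightarrow> 'h::real_inner \<Rightarrow> 'h) \<Rightarrow> ereal" where
  "spec_delta E = Inf (ereal ` (pvm_spectrum E - {0}))"

definition spec_measure :: "(real set \<Rightarrow> 'h::real_inner \<Rightarrow> 'h) \<Rightarrow> 'h \<Rightarrow> real measure" where
  "spec_measure E f = measure_of UNIV (sets borel) (\<lambda>B. ennreal (inner (E B f) f))"

definition rpow :: "real \<Rightarrow> real \<Rightarrow> real" where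
  "rpow l t = (if l < 0 then 0 else if l = 0 then (if t = 0 then 1 else 0) else l powr t)"

definition Hsob :: "(real set \<Rightarrow> 'h::real_inner \<Rightarrow> 'h) \<Rightarrow> real \<Rightarrow> 'h set" where
  "Hsob E t = {f. (\<integral>\<^sup>+ l. ennreal (rpow l t) \<partial>spec_measure E f) < \<infinity>}"

definition Hsob_norm2 :: "(real set \<Rightarrow> 'h::real_inner \<Rightarrow> 'h) \<Rightarrow> real \<Rightarrow> 'h \<Rightarrow> ennreal" where
  "Hsob_norm2 E t f = (\<integral>\<^sup>+ l. indicator {0..} l * ennreal ((1 + l) powr t) \<partial>spec_measure E f)"

definition Hlog :: "(real set \<Rightarrow> 'h::real_inner \<Rightarrow> 'h) \<Rightarrow> 'h set" where
  "Hlog E = {f. (\<integral>\<^sup>+ l. indicator {0<..} l * ennreal ((ln l)\<^sup>2) \<partial>spec_measure E f) < \<infinity>}"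

definition Hlog_norm2 :: "(real set \<Rightarrow> 'h::real_inner \<Rightarrow> 'h) \<Rightarrow> 'h \<Rightarrow> ennreal" where
  "Hlog_norm2 E f = ennreal ((norm f)\<^sup>2)
     + (\<integral>\<^sup>+ l. indicator {0<..} l * ennreal ((ln l)\<^sup>2) \<partial>spec_measure E f)"

definition cont_embed_log :: "(real set \<Rightarrow> 'h::real_inner \<Rightarrow> 'h) \<Rightarrow> real \<Rightarrow> bool" where
  "cont_embed_log E t \<longleftrightarrow> Hsob E t \<subseteq> Hlog E \<and>
     (\<exists>C::real. C \<ge> 0 \<and> (\<forall>f\<in>Hsob E t. Hlog_norm2 E f \<le> ennreal C * Hsob_norm2 E t f))"

end

theory Submission
  imports Defs
begin

lemma my_summable_norm_cancel:
  fixes f :: "nat \<Rightarrow> 'a::{real_normed_vector,complete_space}"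
  assumes "summable (\<lambda>n. norm (f n))" shows "summable f"
proof -
  have r: "\<forall>e>0. \<exists>N. \<forall>m\<ge>N. \<forall>n. norm (sum f {m..<n}) < e"
  proof clarify
    fix e :: real assume "e > 0"
    with assms[unfolded summable_Cauchy] obtain N where
      N: "\<And>m n. m \<ge> N \<Longrightarrow> norm (sum (\<lambda>n. norm (f n)) {m..<n}) < e" by blast
    have "norm (sum f {m..<n}) < e" if "m \<ge> N" for m n
      using N[OF that, of n] norm_sum[of f "{m..<n}"]
      by (smt (verit, del_insts) real_norm_def sum_nonneg norm_ge_zero)
    then show "\<exists>N. \<forall>m\<ge>N. \<forall>n. norm (sum f {m..<n}) < e" by blast
  qed
  then show "summable f"
    unfolding summable_iff_convergent Cauchy_convergent_iff [symmetric] Cauchy_iff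
  proof clarify
    fix e :: real
    assume "0 < e"
    with r obtain N where N: "\<And>m n. m \<ge> N \<Longrightarrow> norm (sum f {m..<n}) < e"
      by blast
    have "norm (sum f {..<m} - sum f {..<n}) < e" if "m\<ge>N" "n\<ge>N" for m n
    proof (cases m n rule: linorder_class.le_cases)
      assume "m \<le> n"
      then show ?thesis
        by (metis N finite_lessThan lessThan_minus_lessThan lessThan_subset_iff norm_minus_commute sum_diff \<open>m\<ge>N\<close>)
    next
      assume "n \<le> m"
      then show ?thesis
        by (metis N finite_lessThan lessThan_minus_lessThan lessThan_subset_iff sum_diff \<open>n\<ge>N\<close>)
    qed
    then show "\<exists>M. \<forall>m\<ge>M. \<forall>n\<ge>M. norm (sum f {..<m} - sum f {..<n}) < e"
      by blast
  qed
qed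

lemma ln_le_powr: fixes x e :: real assumes "x > 0" "e > 0" shows "ln x \<le> x powr e / e"
proof -
  have "ln (x powr e) \<le> x powr e - 1" using assms ln_le_minus_one[of "x powr e"] by simp
  then have "e * ln x \<le> x powr e" using assms by (simp add: ln_powr)
  then show ?thesis using assms by (simp add: field_simps)
qed

lemma key_ineq: fixes d l e :: real assumes "0 < d" "d < l" "e > 0"
  shows "(ln l)\<^sup>2 \<le> (\<bar>ln d\<bar> + 1/e)\<^sup>2 * (1+l) powr (2*e)"
proof -
  define P where "P = (1+l) powr e"
  have P1: "P \<ge> 1" unfolding P_def by (rule ge_one_powr_ge_zero) (use assms in auto)
  have "\<bar>ln l\<bar> \<le> (\<bar>ln d\<bar> + 1/e) * P"
  proof (cases "l \<le> 1")
    case True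
    then have "\<bar>ln l\<bar> \<le> \<bar>ln d\<bar>" using assms by (simp add: ln_le_zero_iff)  
    also have "\<dots> \<le> \<bar>ln d\<bar> * P" using P1 by (simp add: mult_le_cancel_left1)
    also have "\<dots> \<le> (\<bar>ln d\<bar> + 1/e) * P" using P1 assms by (simp add: distrib_right)
    finally show ?thesis .
  next
    case False
    then have "\<bar>ln l\<bar> = ln l" by simp
    also have "\<dots> \<le> ln (1+l)" using False by simp
    also have "\<dots> \<le> P / e" unfolding P_def using ln_le_powr[of "1+l" e] False assms by simp
    also have "\<dots> \<le> (\<bar>ln d\<bar> + 1/e) * P" using P1 assms by (simp add: distrib_right)
    finally show ?thesis .
  qed
  then have "\<bar>ln l\<bar>\<^sup>2 \<le> ((\<bar>ln d\<bar> + 1/e) * P)\<^sup>2"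
    by (intro power_mono) auto
  also have "\<dots> = (\<bar>ln d\<bar> + 1/e)\<^sup>2 * (1+l) powr (2*e)"
  proof -
    have "P\<^sup>2 = (1+l) powr (2*e)" unfolding P_def power2_eq_square
      by (metis mult_2 powr_add)
    then show ?thesis by (simp add: power_mult_distrib)
  qed
  finally show ?thesis by simp
qed

lemma sob_ineq: fixes l t :: real assumes "l \<ge> 0" "t > 0" shows "(1+l) powr t \<le> 2 powr t * (1 + rpow l t)"
proof (cases "l \<le> 1")
  case True
  have "(1+l) powr t \<le> 2 powr t" using True assms by (intro powr_mono2) auto
  moreover have "rpow l t \<ge> 0" unfolding rpow_def by auto
  moreover have "2 powr t * 1 \<le> 2 powr t * (1 + rpow l t)"
    by (rule mult_left_mono) (use \<open>rpow l t \<ge> 0\<close> in auto)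
  ultimately show ?thesis by linarith
next
  case False
  have "(1+l) powr t \<le> (2*l) powr t" using False assms by (intro powr_mono2) auto
  also have "\<dots> = 2 powr t * l powr t" using False by (simp add: powr_mult)
  also have "\<dots> \<le> 2 powr t * (1 + rpow l t)" using False unfolding rpow_def by simp
  finally show ?thesis .
qed

lemma rpow_meas[measurable]: "(\<lambda>l. rpow l t) \<in> borel_measurable borel"
proof -
  have 1: "{x \<in> space borel. x = (0::real)} = {0}" by auto
  have 2: "{l \<in> space borel. l < (0::real)} = {..<0}" by auto
  show ?thesis
  unfolding rpow_def
  apply (rule measurable_If)
  apply simp
  apply (rule measurable_If)
  apply simp
  apply simp
  apply (simp only: 1 2)
  apply simp
  apply (simp only: 1 2)
  apply simp
  done
qed

context
  fixes E :: "real set \<Rightarrow> 'h::{real_inner,complete_space} \<Rightarrow> 'h"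
  assumes pvm: "pvm E"
begin

lemma P1: "\<forall>B\<in>sets borel. bounded_linear (E B)
        \<and> (\<forall>x. E B (E B x) = E B x)
        \<and> (\<forall>x y. inner (E B x) y = inner x (E B y))"
  using pvm[unfolded pvm_def, THEN conjunct1] .
lemma P2: "E {} = (\<lambda>x. 0)"
  using pvm[unfolded pvm_def, THEN conjunct2, THEN conjunct1] .
lemma P3: "E UNIV = id"
  using pvm[unfolded pvm_def, THEN conjunct2, THEN conjunct2, THEN conjunct1] .
lemma P4: "\<forall>A\<in>sets borel. \<forall>B\<in>sets borel. \<forall>x. E (A \<inter> B) x = E A (E B x)"
  using pvm[unfolded pvm_def, THEN conjunct2, THEN conjunct2, THEN conjunct2, THEN conjunct1] .
lemma P5: "\<forall>A x. range A \<subseteq> sets borel \<longrightarrow> disjoint_family A \<longrightarrow>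
        (\<lambda>n. E (A n) x) sums E (\<Union>n. A n) x"
  using pvm[unfolded pvm_def, THEN conjunct2, THEN conjunct2, THEN conjunct2, THEN conjunct2] .

lemma E_bl: "B \<in> sets borel \<Longrightarrow> bounded_linear (E B)"
  using P1 by simp
lemma E_idem: "B \<in> sets borel \<Longrightarrow> E B (E B x) = E B x"
  using P1 by simp
lemma E_sa: "B \<in> sets borel \<Longrightarrow> inner (E B x) y = inner x (E B y)"
  using P1 by simp
lemma E_empty: "E {} x = 0"
  using P2 by simp
lemma E_UNIV: "E UNIV x = x"
  using P3 by simp
lemma E_Int: "A \<in> sets borel \<Longrightarrow> B \<in> sets borel \<Longrightarrow> E (A \<inter> B) x = E A (E B x)"
  using P4 by simp
lemma E_sums: "range A \<subseteq> sets borel \<Longrightarrow> disjoint_family A \<Longrightarrow> (\<lambda>n. E (A n) x) sums E (\<Union>n. A n) x"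
  using P5 by simp
lemma E_zero: "B \<in> sets borel \<Longrightarrow> E B 0 = 0"
  using E_bl linear_simps(3) by blast
lemma E_scale: "B \<in> sets borel \<Longrightarrow> E B (c *\<^sub>R x) = c *\<^sub>R E B x"
  using E_bl linear_simps(5) by blast

lemma E_inner: "B \<in> sets borel \<Longrightarrow> inner (E B f) f = (norm (E B f))\<^sup>2"
proof -
  assume B: "B \<in> sets borel"
  have "inner (E B f) f = inner (E B (E B f)) f" by (simp add: E_idem B)
  also have "\<dots> = inner (E B f) (E B f)" by (simp add: E_sa B)
  finally show ?thesis by (simp add: power2_norm_eq_inner)
qed

lemma sets_spec[simp, measurable_cong]: "sets (spec_measure E f) = sets borel"
  unfolding spec_measure_def by (metis sets.sets_measure_of_eq space_borel)
lemma space_spec[simp]: "space (spec_measure E f) = UNIV"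
  by (metis sets_eq_imp_space_eq sets_spec space_borel)

lemma emeasure_spec: assumes "B \<in> sets borel"
  shows "emeasure (spec_measure E f) B = ennreal (inner (E B f) f)"
  unfolding spec_measure_def
proof (rule emeasure_measure_of_sigma)
  show "sigma_algebra UNIV (sets borel)" by (metis sets.sigma_algebra_axioms space_borel)
  show "positive (sets borel) (\<lambda>B. ennreal (E B f \<bullet> f))"
    unfolding positive_def by (simp add: E_empty)
  show "countably_additive (sets borel) (\<lambda>B. ennreal (E B f \<bullet> f))"
    unfolding countably_additive_def
  proof clarify
    fix A :: "nat \<Rightarrow> real set"
    assume A: "range A \<subseteq> sets borel" "disjoint_family A"
    have "(\<lambda>n. inner (E (A n) f) f) sums inner (E (\<Union>n. A n) f) f"
      using bounded_linear.sums[OF bounded_linear_inner_left E_sums[OF A]] .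
    moreover have "0 \<le> inner (E (A n) f) f" for n
    proof -
      have "A n \<in> sets borel" using A(1) by blast
      then show ?thesis by (simp add: E_inner)
    qed
    ultimately show "(\<Sum>n. ennreal (E (A n) f \<bullet> f)) = ennreal (E (\<Union> (range A)) f \<bullet> f)"
      by (rule suminf_ennreal_eq[rotated])
  qed
qed (fact assms)

lemma emeasure_spec_UNIV: "emeasure (spec_measure E f) UNIV = ennreal ((norm f)\<^sup>2)"
  by (simp add: emeasure_spec E_UNIV power2_norm_eq_inner)

lemma spec_finite[simp]: "emeasure (spec_measure E f) A < \<infinity>"
  using emeasure_space[of "spec_measure E f" A] emeasure_spec_UNIV[of f]
  by (simp add: le_less_trans)

lemma spec_null: assumes B: "B \<in> sets borel" and dis: "B \<inter> pvm_spectrum E = {}"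
  shows "B \<in> null_sets (spec_measure E f)"
proof -
  let ?I = "{(p,q). p \<in> \<rat> \<and> q \<in> \<rat> \<and> E {p<..<q} = (\<lambda>x. 0)}"
  have cI: "countable ?I"
    by (rule countable_subset[of _ "\<rat> \<times> \<rat>"]) (auto simp: countable_rat)
  have nI: "{p<..<q} \<in> null_sets (spec_measure E f)" if "(p,q) \<in> ?I" for p q
    using that by (simp add: null_sets_def emeasure_spec)
  have "(\<Union>i\<in>?I. {fst i<..<snd i}) \<in> null_sets (spec_measure E f)"
    by (rule null_sets_UN'[OF cI]) (use nI in auto)
  moreover have "B \<subseteq> (\<Union>i\<in>?I. {fst i<..<snd i})"
  proof
    fix x assume "x \<in> B"
    then have "x \<notin> pvm_spectrum E" using dis by auto
    then obtain e where e: "e > 0" "E {x - e<..<x + e} = (\<lambda>x. 0)"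
      unfolding pvm_spectrum_def by auto
    obtain p where p: "p \<in> \<rat>" "x - e < p" "p < x" using Rats_dense_in_real[of "x-e" x] e by auto
    obtain q where q: "q \<in> \<rat>" "x < q" "q < x + e" using Rats_dense_in_real[of x "x+e"] e by auto
    have "{p<..<q} = {p<..<q} \<inter> {x - e<..<x + e}" using p q by auto
    then have "E {p<..<q} z = 0" for z
      by (metis E_Int E_zero borel_open e(2) open_greaterThanLessThan)
    then have "(p,q) \<in> ?I" using p q by auto
    then show "x \<in> (\<Union>i\<in>?I. {fst i<..<snd i})" using p q by force
  qed
  ultimately show ?thesis using B null_sets_subset[of _ "spec_measure E f" B] by simp
qed


lemma AE_spec: assumes "B \<in> sets borel" "B \<inter> pvm_spectrum E = {}"
  shows "AE l in spec_measure E f. l \<notin> B"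
  by (rule AE_not_in[OF spec_null[OF assms]])

lemma int_one: "(\<integral>\<^sup>+ l. 1 \<partial>spec_measure E f) = ennreal ((norm f)\<^sup>2)"
  by (simp add: emeasure_spec_UNIV)

lemma part1:
  assumes spec: "pvm_spectrum E \<subseteq> {0..}" and dpos: "spec_delta E > 0" and e: "e > 0"
  shows "cont_embed_log E (2 * e)"
proof -
  obtain d where d: "0 < ereal d" "ereal d < spec_delta E" using ereal_dense2[OF dpos] by blast
  have dp: "d > 0" using d by simp
  have sig: "l = 0 \<or> l > d" if "l \<in> pvm_spectrum E" for l
  proof (cases "l = 0")
    case False
    then have "spec_delta E \<le> ereal l" unfolding spec_delta_def using that
      by (intro Inf_lower) auto
    have "ereal d < ereal l" using d(2) \<open>spec_delta E \<le> ereal l\<close> by (rule less_le_trans)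
    then show ?thesis by simp
  qed simp
  define B0 where "B0 = {..<(0::real)} \<union> {0<..d}"
  have B0: "B0 \<in> sets borel" unfolding B0_def by simp
  have dis: "B0 \<inter> pvm_spectrum E = {}" unfolding B0_def using spec sig by fastforce
  have AE: "AE l in spec_measure E f. l = 0 \<or> l > d" for f
    using AE_spec[OF B0 dis, of f] by eventually_elim (auto simp: B0_def)
  define C where "C = (\<bar>ln d\<bar> + 1/e)\<^sup>2"
  have C0: "C \<ge> 0" unfolding C_def by simp
  define t where "t = 2 * e"
  have t0: "t > 0" using e by (simp add: t_def)
  have bound: "Hlog_norm2 E f \<le> ennreal (1 + C) * Hsob_norm2 E t f" for f
  proof -
    have 1: "ennreal ((norm f)\<^sup>2) \<le> Hsob_norm2 E t f"
      unfolding Hsob_norm2_def int_one[symmetric]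
    proof (rule nn_integral_mono_AE)
      show "AE l in spec_measure E f. 1 \<le> indicator {0..} l * ennreal ((1 + l) powr t)"
        using AE[of f]
      proof eventually_elim
        case (elim l)
        then have "l \<ge> 0" using dp by auto
        moreover have "(1 + l) powr t \<ge> 1" using \<open>l \<ge> 0\<close> t0 by (intro ge_one_powr_ge_zero) auto
        ultimately show ?case by simp
      qed
    qed
    have 2: "(\<integral>\<^sup>+ l. indicator {0<..} l * ennreal ((ln l)\<^sup>2) \<partial>spec_measure E f)
        \<le> ennreal C * Hsob_norm2 E t f"
      unfolding Hsob_norm2_def
    proof -
      have "(\<integral>\<^sup>+ l. indicator {0<..} l * ennreal ((ln l)\<^sup>2) \<partial>spec_measure E f)
          \<le> (\<integral>\<^sup>+ l. ennreal C * (indicator {0..} l * ennreal ((1 + l) powr t)) \<partial>spec_measure E f)"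
      proof (rule nn_integral_mono_AE)
        show "AE l in spec_measure E f. indicator {0<..} l * ennreal ((ln l)\<^sup>2)
            \<le> ennreal C * (indicator {0..} l * ennreal ((1 + l) powr t))"
          using AE[of f]
        proof eventually_elim
          case (elim l)
          show ?case
          proof (cases "l = 0")
            case False
            then have l: "l > d" using elim by auto
            then have "(ln l)\<^sup>2 \<le> C * (1 + l) powr t"
              unfolding C_def t_def using key_ineq[OF dp l e] by simp
            then show ?thesis using l dp C0
              by (simp add: ennreal_mult[symmetric] ennreal_leI)
          qed simp
        qed
      qed
      also have "\<dots> = ennreal C * (\<integral>\<^sup>+ l. indicator {0..} l * ennreal ((1 + l) powr t) \<partial>spec_measure E f)"
        by (rule nn_integral_cmult) measurable
      finally show "(\<integral>\<^sup>+ l. indicator {0<..} l * ennreal ((ln l)\<^sup>2) \<partial>spec_measure E f)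
          \<le> ennreal C * (\<integral>\<^sup>+ l. indicator {0..} l * ennreal ((1 + l) powr t) \<partial>spec_measure E f)" .
    qed
    have "Hlog_norm2 E f \<le> Hsob_norm2 E t f + ennreal C * Hsob_norm2 E t f"
      unfolding Hlog_norm2_def using 1 2 by (rule add_mono)
    also have "\<dots> = ennreal (1 + C) * Hsob_norm2 E t f"
    proof -
      have "ennreal (1 + C) = 1 + ennreal C" using C0 by (simp add: ennreal_plus)
      then show ?thesis by (simp add: distrib_right)
    qed
    finally show ?thesis .
  qed
  have incl: "f \<in> Hlog E" if f: "f \<in> Hsob E t" for f
  proof -
    have "Hsob_norm2 E t f \<le> (\<integral>\<^sup>+ l. ennreal (2 powr t) * (1 + ennreal (rpow l t)) \<partial>spec_measure E f)"
      unfolding Hsob_norm2_def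
    proof (rule nn_integral_mono)
      fix l
      show "indicator {0..} l * ennreal ((1 + l) powr t) \<le> ennreal (2 powr t) * (1 + ennreal (rpow l t))"
      proof (cases "l \<ge> 0")
        case True
        have "rpow l t \<ge> 0" unfolding rpow_def by auto
        then have eq: "ennreal (2 powr t * (1 + rpow l t)) = ennreal (2 powr t) * (1 + ennreal (rpow l t))"
          by (simp add: ennreal_mult ennreal_plus)
        have "ennreal ((1 + l) powr t) \<le> ennreal (2 powr t * (1 + rpow l t))"
          using sob_ineq[OF True t0] by (rule ennreal_leI)
        then show ?thesis using True eq by simp
      qed simp
    qed
    also have "\<dots> = ennreal (2 powr t) * ((\<integral>\<^sup>+ l. 1 \<partial>spec_measure E f) + (\<integral>\<^sup>+ l. ennreal (rpow l t) \<partial>spec_measure E f))"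
      by (subst nn_integral_cmult, measurable, subst nn_integral_add, auto)
    also have "\<dots> < \<infinity>" using f unfolding Hsob_def int_one
      by (simp add: ennreal_mult_less_top)
    finally have fin: "Hsob_norm2 E t f < \<infinity>" .
    have "(\<integral>\<^sup>+ l. indicator {0<..} l * ennreal ((ln l)\<^sup>2) \<partial>spec_measure E f) \<le> Hlog_norm2 E f"
      unfolding Hlog_norm2_def by simp
    also have "\<dots> \<le> ennreal (1 + C) * Hsob_norm2 E t f" by (rule bound)
    also have "\<dots> < \<infinity>" using fin by (simp add: ennreal_mult_less_top)
    finally show ?thesis unfolding Hlog_def by simp
  qed
  show ?thesis unfolding cont_embed_log_def t_def[symmetric]
    using incl bound C0 by (intro conjI exI[of _ "1 + C"]) auto
qed


lemma E_nonzero_open: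
  assumes "l \<in> pvm_spectrum E" "open U" "l \<in> U"
  shows "\<exists>g. E U g \<noteq> 0"
proof (rule ccontr)
  assume "\<not> ?thesis"
  then have U0: "E U g = 0" for g by auto
  obtain e where e: "e > 0" "ball l e \<subseteq> U" using assms openE by blast
  have "{l - e<..<l + e} = ball l e" by (auto simp: ball_def dist_real_def)
  then have sub: "{l - e<..<l + e} = {l - e<..<l + e} \<inter> U" using e by auto
  have "E {l - e<..<l + e} z = 0" for z
    using E_Int[of "{l - e<..<l + e}" U z] sub assms(2) U0 E_zero[of "{l - e<..<l + e}"]
    by (simp add: borel_open)
  then have "E {l - e<..<l + e} = (\<lambda>x. 0)" by auto
  then show False using assms(1) e(1) unfolding pvm_spectrum_def by auto
qed

lemma part2:
  assumes hyp: "\<forall>k::nat. k \<ge> 1 \<longrightarrow> {1 / real (k + 1)<..1 / real k} \<inter> pvm_spectrum E \<noteq> {}"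
    and e: "e > 0"
  shows "\<exists>f. f \<in> Hsob E (2 * e) \<and> f \<notin> Hlog E"
proof -
  define K where "K m = {1 / (2 * real m + 1)<..<1 / (2 * real m - 1)}" for m :: nat
  have KE: "\<exists>g. E (K m) g \<noteq> 0" if m: "m \<ge> 1" for m
  proof -
    obtain l where l: "l \<in> pvm_spectrum E" "1 / real (2*m + 1) < l" "l \<le> 1 / real (2*m)"
      using hyp[rule_format, of "2*m"] m by auto
    have "1 / real (2*m) < 1 / (2 * real m - 1)" using m by (simp add: divide_strict_left_mono)
    then have "l \<in> K m" using l unfolding K_def by (auto simp: add.commute)
    moreover have "open (K m)" unfolding K_def by simp
    ultimately show ?thesis using E_nonzero_open l(1) by blast
  qed
  define mm where "mm j = nat \<lceil>exp ((4::real) ^ j)\<rceil> + j + 1" for j :: nat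
  define A where "A j = K (mm j)" for j
  have Ab[measurable]: "A j \<in> sets borel" for j unfolding A_def K_def by simp
  have mm1: "mm j \<ge> 1" for j unfolding mm_def by simp
  have mm_exp: "real (mm j) \<ge> exp ((4::real) ^ j) + 1" for j
  proof -
    have "exp ((4::real)^j) \<le> real (nat \<lceil>exp ((4::real) ^ j)\<rceil>)" by linarith
    then show ?thesis unfolding mm_def by simp linarith
  qed
  have mm_mono: "mm i < mm j" if "i < j" for i j
  proof -
    have "exp ((4::real)^i) \<le> exp ((4::real)^j)" using that by simp
    then have "\<lceil>exp ((4::real)^i)\<rceil> \<le> \<lceil>exp ((4::real)^j)\<rceil>" by (rule ceiling_mono)
    then have "nat \<lceil>exp ((4::real)^i)\<rceil> \<le> nat \<lceil>exp ((4::real)^j)\<rceil>" by (rule nat_mono)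
    then show ?thesis unfolding mm_def using that by linarith
  qed
  have Kdisj: "K m \<inter> K m' = {}" if "m < m'" "m \<ge> 1" for m m'
  proof -
    have "real m + 1 \<le> real m'" using that by simp
    then have "1 / (2 * real m' - 1) \<le> 1 / (2 * real m + 1)" using that
      by (intro divide_left_mono) auto
    then show ?thesis unfolding K_def by auto
  qed
  have Adisj: "A i \<inter> A j = {}" if "i \<noteq> j" for i j
  proof (cases "i < j")
    case True then show ?thesis unfolding A_def using Kdisj mm_mono mm1 by blast
  next
    case False then have "j < i" using that by simp
    then show ?thesis unfolding A_def using Kdisj mm_mono mm1 by blast
  qed
  have Aprop: "0 < l \<and> l \<le> 1 \<and> (ln l)\<^sup>2 \<ge> 16 ^ j" if "l \<in> A j" for l j
  proof -
    let ?m = "real (mm j)"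
    have m1: "?m \<ge> 1" using mm1[of j] by simp
    have lb: "1 / (2 * ?m + 1) < l" and ub: "l < 1 / (2 * ?m - 1)" using that unfolding A_def K_def by auto
    have lpos: "0 < l" using lb m1 by (smt (verit) divide_pos_pos)
    have "2 * ?m - 1 \<ge> exp ((4::real) ^ j)" using mm_exp[of j] m1 by simp
    then have "1 / (2 * ?m - 1) \<le> 1 / exp ((4::real) ^ j)" using m1 by (intro divide_left_mono) (auto intro!: mult_pos_pos)
    then have "l < 1 / exp ((4::real) ^ j)" using ub by linarith
    then have lexp: "l < exp (- ((4::real) ^ j))" by (simp add: exp_minus inverse_eq_divide)
    then have "ln l < - ((4::real) ^ j)" using lpos by (metis ln_exp ln_less_cancel_iff exp_gt_zero)
    then have "(4::real) ^ j \<le> \<bar>ln l\<bar>" by simp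
    then have "((4::real) ^ j)\<^sup>2 \<le> \<bar>ln l\<bar>\<^sup>2" by (intro power_mono) auto
    moreover have "((4::real) ^ j)\<^sup>2 = 16 ^ j"
    proof -
      have "((4::real) ^ j)\<^sup>2 = (4*4)^j" unfolding power2_eq_square power_mult_distrib by (rule refl)
      then show ?thesis by simp
    qed
    moreover have "l \<le> 1" using lexp by (smt (verit) exp_le_one_iff zero_le_power)
    ultimately show ?thesis using lpos by simp
  qed
  have "\<forall>j. \<exists>g. E (A j) g \<noteq> 0" unfolding A_def using KE mm1 by blast
  then obtain g where g: "\<And>j. E (A j) (g j) \<noteq> 0" by metis
  define u where "u j = (1 / norm (E (A j) (g j))) *\<^sub>R E (A j) (g j)" for j
  have nu: "norm (u j) = 1" for j unfolding u_def using g[of j] by simp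
  have EAu: "E (A j) (u j) = u j" for j unfolding u_def by (simp add: E_scale E_idem)
  have EBu: "E B (u j) = 0" if "B \<in> sets borel" "B \<inter> A j = {}" for B j
    unfolding u_def using that by (simp add: E_scale E_Int[symmetric] E_empty)
  have summ: "summable (\<lambda>j. (1/2::real)^j *\<^sub>R u j)"
    by (rule my_summable_norm_cancel) (simp add: nu)
  define f where "f = (\<Sum>j. (1/2::real)^j *\<^sub>R u j)"
  have fsums: "(\<lambda>j. (1/2::real)^j *\<^sub>R u j) sums f" unfolding f_def using summ by (rule summable_sums)
  have EBf: "(\<lambda>j. (1/2::real)^j *\<^sub>R E B (u j)) sums E B f" if "B \<in> sets borel" for B
    using bounded_linear.sums[OF E_bl[OF that] fsums] by (simp add: E_scale that)
  have EAf: "E (A j) f = (1/2::real)^j *\<^sub>R u j" for j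
  proof -
    have "(\<lambda>i. (1/2::real)^i *\<^sub>R E (A j) (u i)) = (\<lambda>i. if i = j then (1/2::real)^i *\<^sub>R u i else 0)"
      using EBu[OF Ab, of j] Adisj EAu by (auto simp: Int_commute)
    then have "(\<lambda>i. if i = j then (1/2::real)^i *\<^sub>R u i else 0) sums E (A j) f" using EBf[OF Ab] by metis
    then show ?thesis using sums_single sums_unique2 by metis
  qed
  have muA: "emeasure (spec_measure E f) (A j) = ennreal ((1/4) ^ j)" for j
  proof -
    have "(norm ((1/2::real)^j *\<^sub>R u j))\<^sup>2 = (1/4) ^ j"
      by (simp add: nu power_mult_distrib[symmetric] power2_eq_square power_mult_distrib)
    moreover have "emeasure (spec_measure E f) (A j) = ennreal ((norm (E (A j) f))\<^sup>2)"
      using emeasure_spec[OF Ab[of j], of f] E_inner[OF Ab[of j], of f] by simp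
    ultimately show ?thesis unfolding EAf by simp
  qed
  define S where "S = (\<Union>j. A j)"
  have Sb: "- S \<in> sets borel" unfolding S_def by measurable
  have "E (- S) f = 0"
  proof -
    have "(\<lambda>j. (1/2::real)^j *\<^sub>R E (- S) (u j)) = (\<lambda>j. 0)"
    proof
      fix j
      have "- S \<inter> A j = {}" unfolding S_def by auto
      then show "(1/2::real)^j *\<^sub>R E (- S) (u j) = 0" using EBu[OF Sb] by simp
    qed
    then show ?thesis using EBf[OF Sb] sums_zero sums_unique2 by metis
  qed
  then have "emeasure (spec_measure E f) (- S) = 0" by (simp add: emeasure_spec Sb)
  then have AES: "AE l in spec_measure E f. l \<in> S"
    using AE_not_in[of "- S" "spec_measure E f"] Sb by (simp add: null_sets_def)
  have "f \<in> Hsob E (2 * e)"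
  proof -
    have "(\<integral>\<^sup>+ l. ennreal (rpow l (2 * e)) \<partial>spec_measure E f) \<le> (\<integral>\<^sup>+ l. 1 \<partial>spec_measure E f)"
    proof (rule nn_integral_mono_AE)
      show "AE l in spec_measure E f. ennreal (rpow l (2 * e)) \<le> 1"
        using AES
      proof eventually_elim
        case (elim l)
        then obtain j where "l \<in> A j" unfolding S_def by auto
        then have "0 < l" "l \<le> 1" using Aprop by auto
        then have "rpow l (2 * e) \<le> 1" unfolding rpow_def using e by (simp add: powr_le1)
        then show ?case by (simp add: ennreal_le_1)
      qed
    qed
    also have "\<dots> < \<infinity>" unfolding int_one by simp
    finally show ?thesis unfolding Hsob_def by simp
  qed
  moreover have "f \<notin> Hlog E"
  proof
    assume "f \<in> Hlog E"
    then have fin: "(\<integral>\<^sup>+ l. indicator {0<..} l * ennreal ((ln l)\<^sup>2) \<partial>spec_measure E f) < \<infinity>"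
      (is "?I < _") unfolding Hlog_def by simp
    have lower: "ennreal (4 ^ j) \<le> ?I" for j
    proof -
      have "(\<integral>\<^sup>+ l. ennreal (16 ^ j) * indicator (A j) l \<partial>spec_measure E f) \<le> ?I"
      proof (rule nn_integral_mono)
        fix l
        show "ennreal (16 ^ j) * indicator (A j) l \<le> indicator {0<..} l * ennreal ((ln l)\<^sup>2)"
          using Aprop[of l j] by (cases "l \<in> A j") (auto intro: ennreal_leI)
      qed
      moreover have "(\<integral>\<^sup>+ l. ennreal (16 ^ j) * indicator (A j) l \<partial>spec_measure E f) = ennreal (4 ^ j)"
      proof -
        have "(\<integral>\<^sup>+ l. ennreal (16 ^ j) * indicator (A j) l \<partial>spec_measure E f)
            = ennreal (16 ^ j) * ennreal ((1/4) ^ j)"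
          by (subst nn_integral_cmult_indicator) (auto simp: muA)
        also have "\<dots> = ennreal (16 ^ j * (1/4) ^ j)" by (simp add: ennreal_mult)
        also have "(16::real) ^ j * (1/4) ^ j = 4 ^ j" by (simp add: power_mult_distrib[symmetric])
        finally show ?thesis .
      qed
      ultimately show ?thesis by simp
    qed
    obtain r where r: "?I = ennreal r" using fin by (cases ?I) auto
    obtain j where "r < (4::real) ^ j" using real_arch_pow[of 4 r] by auto
    moreover have "ennreal (4 ^ j) \<le> ennreal r" using lower[of j] r by simp
    ultimately have "(4::real)^j \<le> 0" by (auto simp: ennreal_le_iff2)
    moreover have "(0::real) < 4^j" by (rule zero_less_power) simp
    ultimately show False by linarith
  qed
  ultimately show ?thesis by blast
qed

end

theorem theorem2:
  fixes E :: "real set \<Rightarrow> 'h::{real_inner,complete_space} \<Rightarrow> 'h"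
  assumes "pvm E"
    and "pvm_spectrum E \<subseteq> {0..}"
  shows "(spec_delta E > 0 \<longrightarrow> (\<forall>\<epsilon>>0. cont_embed_log E (2 * \<epsilon>)))
       \<and> ((spec_delta E = 0 \<and>
           (\<forall>k::nat. k \<ge> 1 \<longrightarrow> {1 / real (k + 1)<..1 / real k} \<inter> pvm_spectrum E \<noteq> {}))
          \<longrightarrow> (\<forall>\<epsilon>>0. \<exists>f. f \<in> Hsob E (2 * \<epsilon>) \<and> f \<notin> Hlog E))"
  using part1[OF assms(1) assms(2)] part2[OF assms(1)] by blast

end
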